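(* Let $M$ be a monoid that embeds into a group $G$ (identify $M$ with its image in $G$). Suppose that $\mathbb Z^{+}[M]$ has nonzero common right multiples. Then for any $a,b\in M$ there exist $k\ge 1$ and signs $\epsilon_1,\delta_1,\ldots,\epsilon_k,\delta_k\in\{1,-1\}$ such that $a^{\epsilon_1}b^{\delta_1}a^{\epsilon_2}b^{\delta_2}\cdots a^{\epsilon_k}b^{\delta_k}=1$ holds in $G$.
   Context: For a monoid $M$, $\mathbb Z^{+}[M]$ denotes the set of elements of the monoid ring $\mathbb Z[M]$ that are linear combinations of elements of $M$ with positive integer coefficients, together with $0$; it is closed under multiplication. We say $\mathbb Z^{+}[M]$ has nonzero common right multiples (satisfies the Ore condition) if for any $p,q\in\mathbb Z^{+}[M]$ there exist $u,v\in\mathbb Z^{+}[M]$, not both zero, with $pu=qv$. *)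

theory Defs
  imports "HOL-Algebra.Group"
begin

text \<open>Z^+[M] for a submonoid M of a group G: finitely supported functions
  M -> nat (nonnegative integer coefficients; the zero function is 0).\<close>
definition pos_monoid_ring :: "'a set \<Rightarrow> ('a \<Rightarrow> nat) set" where
  "pos_monoid_ring M = {p. finite {x. p x \<noteq> 0} \<and> {x. p x \<noteq> 0} \<subseteq> M}"

definition ring_conv :: "('a, 'b) monoid_scheme \<Rightarrow> ('a \<Rightarrow> nat) \<Rightarrow> ('a \<Rightarrow> nat) \<Rightarrow> 'a \<Rightarrow> nat" where
  "ring_conv G p q g =
     (\<Sum>(x, y) \<in> {(x, y). p x \<noteq> 0 \<and> q y \<noteq> 0 \<and> x \<otimes>\<^bsub>G\<^esub> y = g}. p x * q y)"

definition has_nonzero_common_right_multiples :: "('a, 'b) monoid_scheme \<Rightarrow> 'a set \<Rightarrow> bool" where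
  "has_nonzero_common_right_multiples G M \<longleftrightarrow>
     (\<forall>p \<in> pos_monoid_ring M. \<forall>q \<in> pos_monoid_ring M.
        \<exists>u \<in> pos_monoid_ring M. \<exists>v \<in> pos_monoid_ring M.
          (u \<noteq> (\<lambda>_. 0) \<or> v \<noteq> (\<lambda>_. 0)) \<and> ring_conv G p u = ring_conv G q v)"

fun alt_word :: "('a, 'b) monoid_scheme \<Rightarrow> 'a \<Rightarrow> 'a \<Rightarrow> (int \<times> int) list \<Rightarrow> 'a" where
  "alt_word G a b [] = \<one>\<^bsub>G\<^esub>"
| "alt_word G a b ((e, d) # es) =
     (a [^]\<^bsub>G\<^esub> e) \<otimes>\<^bsub>G\<^esub> (b [^]\<^bsub>G\<^esub> d) \<otimes>\<^bsub>G\<^esub> alt_word G a b es"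

end

theory Submission
  imports Defs
begin

fun wlist :: "('a \<Rightarrow> 'a) \<Rightarrow> ('a \<Rightarrow> int \<times> int) \<Rightarrow> 'a \<Rightarrow> nat \<Rightarrow> (int \<times> int) list" where
  "wlist f w s 0 = []"
| "wlist f w s (Suc n) = w s # wlist f w (f s) n"

lemma wlist_len: "length (wlist f w s n) = n"
  by (induction n arbitrary: s) auto

lemma wlist_set: "\<forall>s. fst (w s) \<in> {1,-1} \<and> snd (w s) \<in> {1,-1} \<Longrightarrow>
   \<forall>(e, d) \<in> set (wlist f w s n). e \<in> {1, -1} \<and> d \<in> {1, -1}"
proof (induction n arbitrary: s)
  case 0 then show ?case by simp
next
  case (Suc n)
  have "fst (w s) \<in> {1,-1} \<and> snd (w s) \<in> {1,-1}" using Suc.prems by blast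
  then have "case w s of (e, d) \<Rightarrow> e \<in> {1, -1} \<and> d \<in> {1, -1}" by (simp add: split_beta)
  then show ?case using Suc by auto
qed

context group
begin

lemma step_sign:
  assumes "c \<in> carrier G" "{y. u y \<noteq> 0} \<subseteq> carrier G"
    and "s \<in> {g. \<exists>y. u y \<noteq> 0 \<and> (g = y \<or> g = c \<otimes> y)}"
  shows "\<exists>e::int. e \<in> {1,-1} \<and> c [^] e \<otimes> s \<in> {g. \<exists>y. u y \<noteq> 0 \<and> (g = y \<or> g = c \<otimes> y)}"
proof -
  obtain y where y: "u y \<noteq> 0" "s = y \<or> s = c \<otimes> y" using assms(3) by auto
  have yc: "y \<in> carrier G" using y assms(2) by auto
  show ?thesis
  proof (cases "s = y")
    case True
    then show ?thesis using y assms(1) by (intro exI[of _ 1]) auto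
  next
    case False
    then have "s = c \<otimes> y" using y by auto
    then have "c [^] (-1::int) \<otimes> s = y"
      using assms(1) yc by (simp add: int_pow_neg m_assoc[symmetric])
    then show ?thesis using y by (intro exI[of _ "-1"]) auto
  qed
qed

lemma walk:
  assumes fin: "finite S" and sub: "S \<subseteq> carrier G" and s0: "s0 \<in> S"
    and ac: "a \<in> carrier G" and bc: "b \<in> carrier G"
    and E: "\<forall>s\<in>S. E s \<in> {1,-1} \<and> a [^] (E s :: int) \<otimes> s \<in> S"
    and D: "\<forall>s\<in>S. D s \<in> {1,-1} \<and> b [^] (D s :: int) \<otimes> s \<in> S"
  shows "\<exists>es :: (int \<times> int) list. length es \<ge> 1 \<and>
           (\<forall>(e, d) \<in> set es. e \<in> {1, -1} \<and> d \<in> {1, -1}) \<and>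
           alt_word G a b es = \<one>"
proof -
  define E' where "E' s = (if s \<in> S then E s else 1)" for s
  define D' where "D' s = (if s \<in> S then D s else 1)" for s
  define f where "f s = b [^] D (a [^] E s \<otimes> s) \<otimes> (a [^] E s \<otimes> s)" for s
  define w where "w s = (- E' s, - D' (a [^] E s \<otimes> s))" for s
  have fS: "f s \<in> S" if "s \<in> S" for s
  proof -
    have "a [^] E s \<otimes> s \<in> S" using bspec[OF E that] by simp
    then show ?thesis unfolding f_def using bspec[OF D] by simp
  qed
  have base: "s = a [^] fst (w s) \<otimes> (b [^] snd (w s) \<otimes> f s)" if "s \<in> S" for s
  proof -
    have t: "a [^] E s \<otimes> s \<in> S" using bspec[OF E that] by simp
    have c1: "s \<in> carrier G" "a [^] E s \<otimes> s \<in> carrier G" using sub that t by auto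
    have "b [^] (- D (a [^] E s \<otimes> s)) \<otimes> f s = a [^] E s \<otimes> s"
      unfolding f_def using bc c1 by (simp add: int_pow_neg m_assoc[symmetric])
    moreover have "a [^] (- E s) \<otimes> (a [^] E s \<otimes> s) = s"
      using ac c1 by (simp add: int_pow_neg m_assoc[symmetric])
    ultimately show ?thesis using that t unfolding w_def E'_def D'_def by simp
  qed
  have ws: "\<forall>s. fst (w s) \<in> {1,-1} \<and> snd (w s) \<in> {1,-1}"
  proof
    fix s
    show "fst (w s) \<in> {1,-1} \<and> snd (w s) \<in> {1,-1}"
      unfolding w_def E'_def D'_def using E D by auto
  qed
  have iter: "\<forall>s\<in>S. s = alt_word G a b (wlist f w s n) \<otimes> (f ^^ n) s" for n
  proof (induction n)
    case 0
    then show ?case using sub by auto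
  next
    case (Suc n)
    show ?case
    proof
      fix s assume s: "s \<in> S"
      have fs: "f s \<in> S" using fS s .
      have fnc: "(f ^^ n) (f s) \<in> carrier G"
      proof -
        have "(f ^^ n) x \<in> S" if "x \<in> S" for x n using that by (induction n) (auto simp: fS)
        then show ?thesis using fs sub by auto
      qed
      have awc: "alt_word G a b es \<in> carrier G" for es
        by (induction es) (auto simp: ac bc)
      have "s = a [^] fst (w s) \<otimes> (b [^] snd (w s) \<otimes> f s)" using base s .
      also have "f s = alt_word G a b (wlist f w (f s) n) \<otimes> (f ^^ n) (f s)"
        using Suc fs by blast
      finally have h: "s = a [^] fst (w s) \<otimes> (b [^] snd (w s) \<otimes> (alt_word G a b (wlist f w (f s) n) \<otimes> (f ^^ n) (f s)))" .
      obtain e d where wd: "w s = (e, d)" by fastforce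
      have "(f ^^ Suc n) s = (f ^^ n) (f s)" by (simp only: funpow_Suc_right o_apply)
      then show "s = alt_word G a b (wlist f w s (Suc n)) \<otimes> (f ^^ Suc n) s"
        using h ac bc fnc awc wd by (simp add: m_assoc)
    qed
  qed
  have orb: "(f ^^ n) s0 \<in> S" for n by (induction n) (auto simp: fS s0)
  have "\<not> inj_on (\<lambda>n. (f ^^ n) s0) {0..card S}"
  proof
    assume inj: "inj_on (\<lambda>n. (f ^^ n) s0) {0..card S}"
    have "(\<lambda>n. (f ^^ n) s0) ` {0..card S} \<subseteq> S" using orb by auto
    then have "card ((\<lambda>n. (f ^^ n) s0) ` {0..card S}) \<le> card S" using fin card_mono by blast
    with card_image[OF inj] show False by simp
  qed
  then obtain i j where ij: "i < j" "(f ^^ i) s0 = (f ^^ j) s0"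
    unfolding inj_on_def by (metis linorder_neqE_nat)
  define s1 where "s1 = (f ^^ i) s0"
  have s1S: "s1 \<in> S" using orb s1_def by auto
  have jj: "j = (j - i) + i" using ij by simp
  have "(f ^^ j) = (f ^^ (j - i)) \<circ> (f ^^ i)" by (subst jj) (rule funpow_add)
  then have "(f ^^ (j - i)) s1 = s1" using ij(2) unfolding s1_def by simp
  moreover have "s1 = alt_word G a b (wlist f w s1 (j - i)) \<otimes> (f ^^ (j - i)) s1"
    using iter[of "j - i"] s1S by blast
  ultimately have eq: "s1 = alt_word G a b (wlist f w s1 (j - i)) \<otimes> s1" by simp
  have awc: "alt_word G a b es \<in> carrier G" for es
    by (induction es) (auto simp: ac bc)
  have s1c: "s1 \<in> carrier G" using s1S sub by blast
  have A: "alt_word G a b (wlist f w s1 (j - i)) = \<one>"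
    using r_cancel_one'[OF s1c awc] eq by simp
  have B: "length (wlist f w s1 (j - i)) \<ge> 1" using ij by (simp add: wlist_len)
  have C: "\<forall>(e, d) \<in> set (wlist f w s1 (j - i)). e \<in> {1, -1} \<and> d \<in> {1, -1}"
    by (rule wlist_set[OF ws])
  show ?thesis by (rule exI[of _ "wlist f w s1 (j - i)"]) (intro conjI A B C)
qed

end

lemma conv_nz:
  assumes "p \<in> pos_monoid_ring M" "u \<in> pos_monoid_ring M"
  shows "ring_conv G p u g \<noteq> 0 \<longleftrightarrow> (\<exists>x y. p x \<noteq> 0 \<and> u y \<noteq> 0 \<and> x \<otimes>\<^bsub>G\<^esub> y = g)"
proof -
  let ?A = "{(x, y). p x \<noteq> 0 \<and> u y \<noteq> 0 \<and> x \<otimes>\<^bsub>G\<^esub> y = g}"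
  have "?A \<subseteq> {x. p x \<noteq> 0} \<times> {y. u y \<noteq> 0}" by auto
  moreover have "finite ({x. p x \<noteq> 0} \<times> {y. u y \<noteq> 0})"
    using assms unfolding pos_monoid_ring_def by auto
  ultimately have fin: "finite ?A" by (rule finite_subset)
  show ?thesis
  proof
    assume h: "ring_conv G p u g \<noteq> 0"
    have "?A \<noteq> {}"
    proof
      assume "?A = {}"
      then have "ring_conv G p u g = 0" unfolding ring_conv_def by (simp only: sum.empty)
      with h show False by contradiction
    qed
    then obtain x y where "(x, y) \<in> ?A" by auto
    then show "\<exists>x y. p x \<noteq> 0 \<and> u y \<noteq> 0 \<and> x \<otimes>\<^bsub>G\<^esub> y = g" by blast
  next
    assume "\<exists>x y. p x \<noteq> 0 \<and> u y \<noteq> 0 \<and> x \<otimes>\<^bsub>G\<^esub> y = g"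
    then obtain x y where xy: "p x \<noteq> 0" "u y \<noteq> 0" "x \<otimes>\<^bsub>G\<^esub> y = g" by blast
    then have mem: "(x, y) \<in> ?A" by simp
    have "p x * u y \<le> ring_conv G p u g"
      unfolding ring_conv_def
      using member_le_sum[OF mem, of "\<lambda>(x, y). p x * u y", OF _ fin] by simp
    moreover have "p x * u y > 0" using xy by simp
    ultimately show "ring_conv G p u g \<noteq> 0" by linarith
  qed
qed

theorem lemma1:
  fixes G :: "('a, 'b) monoid_scheme" and M :: "'a set"
  assumes "group G"
    and "submonoid M G"
    and "has_nonzero_common_right_multiples G M"
    and "a \<in> M" and "b \<in> M"
  shows "\<exists>es :: (int \<times> int) list. length es \<ge> 1 \<and>
           (\<forall>(e, d) \<in> set es. e \<in> {1, -1} \<and> d \<in> {1, -1}) \<and>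
           alt_word G a b es = \<one>\<^bsub>G\<^esub>"
proof -
  interpret group G by fact
  interpret sm: submonoid M G by fact
  have ac: "a \<in> carrier G" and bc: "b \<in> carrier G" using assms(4,5) by auto
  define p where "p x = (if x = \<one>\<^bsub>G\<^esub> then 1 else 0) + (if x = a then 1 else 0 :: nat)" for x
  define q where "q x = (if x = \<one>\<^bsub>G\<^esub> then 1 else 0) + (if x = b then 1 else 0 :: nat)" for x
  have pnz: "p x \<noteq> 0 \<longleftrightarrow> x = \<one>\<^bsub>G\<^esub> \<or> x = a" for x unfolding p_def by auto
  have qnz: "q x \<noteq> 0 \<longleftrightarrow> x = \<one>\<^bsub>G\<^esub> \<or> x = b" for x unfolding q_def by auto
  have pM: "p \<in> pos_monoid_ring M" unfolding pos_monoid_ring_def using pnz assms(4)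
    by (auto intro: finite_subset[of _ "{\<one>\<^bsub>G\<^esub>, a}"])
  have qM: "q \<in> pos_monoid_ring M" unfolding pos_monoid_ring_def using qnz assms(5)
    by (auto intro: finite_subset[of _ "{\<one>\<^bsub>G\<^esub>, b}"])
  obtain u v where uM: "u \<in> pos_monoid_ring M" and vM: "v \<in> pos_monoid_ring M"
    and nz: "u \<noteq> (\<lambda>_. 0) \<or> v \<noteq> (\<lambda>_. 0)" and eqc: "ring_conv G p u = ring_conv G q v"
    using assms(3) pM qM unfolding has_nonzero_common_right_multiples_def by blast
  have uc: "{y. u y \<noteq> 0} \<subseteq> carrier G" and vc: "{y. v y \<noteq> 0} \<subseteq> carrier G"
    using uM vM unfolding pos_monoid_ring_def by auto
  have ufin: "finite {y. u y \<noteq> 0}" using uM unfolding pos_monoid_ring_def by auto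
  define S where "S = {g. \<exists>y. u y \<noteq> 0 \<and> (g = y \<or> g = a \<otimes>\<^bsub>G\<^esub> y)}"
  define T where "T = {g. \<exists>y. v y \<noteq> 0 \<and> (g = y \<or> g = b \<otimes>\<^bsub>G\<^esub> y)}"
  have u1: "\<one>\<^bsub>G\<^esub> \<otimes>\<^bsub>G\<^esub> y = y" if "u y \<noteq> 0" for y using that uc by auto
  have v1: "\<one>\<^bsub>G\<^esub> \<otimes>\<^bsub>G\<^esub> y = y" if "v y \<noteq> 0" for y using that vc by auto
  have S': "S = {g. \<exists>x y. (x = \<one>\<^bsub>G\<^esub> \<or> x = a) \<and> u y \<noteq> 0 \<and> x \<otimes>\<^bsub>G\<^esub> y = g}"
    unfolding S_def by (force simp: u1)
  have T': "T = {g. \<exists>x y. (x = \<one>\<^bsub>G\<^esub> \<or> x = b) \<and> v y \<noteq> 0 \<and> x \<otimes>\<^bsub>G\<^esub> y = g}"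
    unfolding T_def by (force simp: v1)
  have Sc: "S = {g. ring_conv G p u g \<noteq> 0}"
    unfolding S' using conv_nz[OF pM uM, where G=G] pnz by simp
  have Tc: "T = {g. ring_conv G q v g \<noteq> 0}"
    unfolding T' using conv_nz[OF qM vM, where G=G] qnz by simp
  have ST: "S = T" using Sc Tc eqc by simp
  have Ssub: "S \<subseteq> carrier G" unfolding S_def using uc ac by auto
  have Sfin: "finite S"
  proof -
    have "S \<subseteq> {y. u y \<noteq> 0} \<union> (\<lambda>y. a \<otimes>\<^bsub>G\<^esub> y) ` {y. u y \<noteq> 0}" unfolding S_def by auto
    then show ?thesis using ufin finite_subset by blast
  qed
  obtain s0 where s0: "s0 \<in> S"
  proof (cases "u = (\<lambda>_. 0)")
    case True
    then obtain y where "v y \<noteq> 0" using nz by auto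
    then have "y \<in> T" unfolding T_def by auto
    then show ?thesis using that ST by auto
  next
    case False
    then obtain y where "u y \<noteq> 0" by auto
    then have "y \<in> S" unfolding S_def by auto
    then show ?thesis using that by auto
  qed
  have Ea: "\<forall>s\<in>S. \<exists>e::int. e \<in> {1,-1} \<and> a [^]\<^bsub>G\<^esub> e \<otimes>\<^bsub>G\<^esub> s \<in> S"
    using step_sign[OF ac uc] unfolding S_def by blast
  obtain E where E: "\<forall>s\<in>S. E s \<in> {1,-1} \<and> a [^]\<^bsub>G\<^esub> (E s :: int) \<otimes>\<^bsub>G\<^esub> s \<in> S"
    using bchoice[OF Ea] by blast
  have Db: "\<forall>s\<in>S. \<exists>e::int. e \<in> {1,-1} \<and> b [^]\<^bsub>G\<^esub> e \<otimes>\<^bsub>G\<^esub> s \<in> S"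
    using step_sign[OF bc vc] unfolding ST T_def by blast
  obtain D where D: "\<forall>s\<in>S. D s \<in> {1,-1} \<and> b [^]\<^bsub>G\<^esub> (D s :: int) \<otimes>\<^bsub>G\<^esub> s \<in> S"
    using bchoice[OF Db] by blast
  show ?thesis using walk[OF Sfin Ssub s0 ac bc E D] .
qed

end
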